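(* Let $\mathcal H_a,\mathcal H_b$ be finite-dimensional Hilbert spaces and let $H$ be a Hermitian operator on $\mathcal H_a\otimes\mathcal H_b$. Then $$\mathcal C_{\rm P}^{1}(H)=\|H\|_\infty-\big(\Delta E_{\rm Sep}(H)+\Delta E_{\rm Sep}(-H)\big).$$
   Context: For a density operator $\rho$ on $\mathcal H_a\otimes\mathcal H_b$, the parallel capacity is $\mathcal C_{\rm P}(\rho,H):=\max_{U_a,U_b}\mathrm{tr}[(U_a\otimes U_b)\rho(U_a\otimes U_b)^\dagger H]-\min_{U_a,U_b}\mathrm{tr}[(U_a\otimes U_b)\rho(U_a\otimes U_b)^\dagger H]$, where $U_a,U_b$ range over all unitaries on $\mathcal H_a$, $\mathcal H_b$ respectively. Let $\mathcal S^1$ be the set of separable density operators on $\mathcal H_a\otimes\mathcal H_b$ (convex hull of product states $\rho_a\otimes\rho_b$), and $\mathcal C_{\rm P}^1(H):=\max_{\rho\in\mathcal S^1}\mathcal C_{\rm P}(\rho,H)$. Let $E_0$ and $E_{\max}$ denote the smallest and largest eigenvalues of $H$, and set $\|H\|_\infty:=E_{\max}-E_0$. The entanglement gap energy is $\Delta E_{\rm Sep}(H):=\min_{\rho\in\mathcal S^1}\mathrm{tr}[\rho H]-E_0$ (and $\Delta E_{\rm Sep}(-H)$ is the same quantity for $-H$, whose smallest eigenvalue is $-E_{\max}$). *)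

theory Defs
  imports "HOL-Analysis.Analysis"
begin

text \<open>Finite-dimensional Hilbert spaces are modelled as complex coordinate spaces
  indexed by finite types; operators are complex square matrices.
  The tensor product space of 'a and 'b is indexed by the pair type.\<close>

definition adj :: "complex^'n^'m \<Rightarrow> complex^'m^'n" where
  "adj A = (\<chi> i j. cnj (A $ j $ i))"

definition mtrace :: "complex^'n^'n \<Rightarrow> complex" where
  "mtrace A = (\<Sum>i\<in>UNIV. A $ i $ i)"

definition hermitian :: "complex^'n^'n \<Rightarrow> bool" where
  "hermitian A \<longleftrightarrow> adj A = A"

definition unitary :: "complex^'n^'n \<Rightarrow> bool" where
  "unitary U \<longleftrightarrow> U ** adj U = mat 1 \<and> adj U ** U = mat 1"

definition psd :: "complex^'n^'n \<Rightarrow> bool" where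
  "psd A \<longleftrightarrow> hermitian A \<and>
     (\<forall>v::complex^'n. (\<Sum>i\<in>UNIV. \<Sum>j\<in>UNIV. cnj (v $ i) * A $ i $ j * v $ j) \<in> \<real> \<and>
        0 \<le> Re (\<Sum>i\<in>UNIV. \<Sum>j\<in>UNIV. cnj (v $ i) * A $ i $ j * v $ j))"

definition density :: "complex^'n^'n \<Rightarrow> bool" where
  "density \<rho> \<longleftrightarrow> psd \<rho> \<and> mtrace \<rho> = 1"

definition kron :: "complex^'a^'a \<Rightarrow> complex^'b^'b \<Rightarrow> complex^('a \<times> 'b)^('a \<times> 'b)" where
  "kron A B = (\<chi> p q. A $ fst p $ fst q * B $ snd p $ snd q)"

definition Sep :: "(complex^('a::finite \<times> 'b::finite)^('a \<times> 'b)) set" where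
  "Sep = convex hull {kron ra rb | ra rb. density ra \<and> density rb}"

text \<open>Energy tr[\<rho> H] (real for Hermitian \<rho>, H).\<close>
definition energy :: "complex^'n^'n \<Rightarrow> complex^'n^'n \<Rightarrow> real" where
  "energy \<rho> H = Re (mtrace (\<rho> ** H))"

text \<open>Real eigenvalues of a matrix; for Hermitian matrices these are all eigenvalues.\<close>
definition real_eigenvalues :: "complex^'n^'n \<Rightarrow> real set" where
  "real_eigenvalues H = {x. \<exists>v. v \<noteq> 0 \<and> H *v v = x *\<^sub>R v}"

definition E0 :: "complex^'n^'n \<Rightarrow> real" where
  "E0 H = Min (real_eigenvalues H)"

definition Emax :: "complex^'n^'n \<Rightarrow> real" where
  "Emax H = Max (real_eigenvalues H)"

definition opnorm_inf :: "complex^'n^'n \<Rightarrow> real" where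
  "opnorm_inf H = Emax H - E0 H"

definition CP :: "complex^('a::finite \<times> 'b::finite)^('a \<times> 'b) \<Rightarrow> complex^('a \<times> 'b)^('a \<times> 'b) \<Rightarrow> real" where
  "CP \<rho> H =
     (SUP (Ua, Ub) \<in> {(Ua :: complex^'a^'a, Ub :: complex^'b^'b). unitary Ua \<and> unitary Ub}.
        energy (kron Ua Ub ** \<rho> ** adj (kron Ua Ub)) H)
   - (INF (Ua, Ub) \<in> {(Ua :: complex^'a^'a, Ub :: complex^'b^'b). unitary Ua \<and> unitary Ub}.
        energy (kron Ua Ub ** \<rho> ** adj (kron Ua Ub)) H)"

definition CP1 :: "complex^('a::finite \<times> 'b::finite)^('a \<times> 'b) \<Rightarrow> real" where
  "CP1 H = (SUP \<rho> \<in> (Sep :: (complex^('a \<times> 'b)^('a \<times> 'b)) set). CP \<rho> H)"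

definition gapSep :: "complex^('a::finite \<times> 'b::finite)^('a \<times> 'b) \<Rightarrow> real" where
  "gapSep H = (INF \<rho> \<in> (Sep :: (complex^('a \<times> 'b)^('a \<times> 'b)) set). energy \<rho> H) - E0 H"

end

theory Submission imports Defs begin

definition cinner :: "complex^'n \<Rightarrow> complex^'n \<Rightarrow> complex" where
  "cinner x y = (\<Sum>i\<in>UNIV. cnj (x$i) * y$i)"
definition qf :: "complex^'n^'n \<Rightarrow> complex^'n \<Rightarrow> complex" where
  "qf A v = cinner v (A *v v)"
definition outer :: "complex^'n \<Rightarrow> complex^'n^'n" where
  "outer v = (\<chi> i j. v$i * cnj (v$j))"

lemma psd_alt: "psd A \<longleftrightarrow> hermitian A \<and> (\<forall>v. qf A v \<in> \<real> \<and> 0 \<le> Re (qf A v))"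
proof -
  have "\<And>v. (\<Sum>i\<in>UNIV. \<Sum>j\<in>UNIV. cnj (v $ i) * A $ i $ j * v $ j) = qf A v"
    by (simp add: qf_def cinner_def matrix_vector_mult_def sum_distrib_left mult.assoc)
  then show ?thesis by (simp add: psd_def)
qed

lemma herm_entry: assumes "hermitian A" shows "cnj (A$j$i) = A$i$j"
proof -
  have "adj A $ i $ j = A $ i $ j" using assms by (simp add: hermitian_def)
  thus ?thesis by (simp add: adj_def)
qed

lemma cnj_cinner: "cnj (cinner x y) = cinner y x"
  by (simp add: cinner_def mult.commute)

lemma adj_inner: "cinner x (A *v y) = cinner (adj A *v x) y"
proof -
  have "cinner x (A *v y) = (\<Sum>i\<in>UNIV. \<Sum>k\<in>UNIV. cnj (x$i) * A$i$k * y$k)"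
    by (simp add: cinner_def matrix_vector_mult_def sum_distrib_left mult.assoc)
  also have "\<dots> = (\<Sum>k\<in>UNIV. \<Sum>i\<in>UNIV. cnj (x$i) * A$i$k * y$k)"
    by (rule sum.swap)
  also have "\<dots> = (\<Sum>k\<in>UNIV. (\<Sum>i\<in>UNIV. cnj (x$i) * A$i$k) * y$k)"
    by (simp add: sum_distrib_right)
  also have "\<dots> = cinner (adj A *v x) y"
    unfolding cinner_def matrix_vector_mult_def adj_def
    by (simp add: mult.commute)
  finally show ?thesis .
qed

lemma adj_adj: "adj (adj A) = A"
  by (simp add: adj_def vec_eq_iff)

lemma herm_qf_real: "hermitian A \<Longrightarrow> qf A v \<in> \<real>"
proof -
  assume h: "hermitian A"
  have "cnj (qf A v) = cinner (A *v v) v" by (simp add: qf_def cnj_cinner)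
  also have "\<dots> = cinner (adj A *v v) v" using h by (simp add: hermitian_def)
  also have "\<dots> = qf A v" by (simp add: qf_def adj_inner)
  finally show ?thesis using Reals_cnj_iff by blast
qed

lemma cinner_add_left: "cinner (x + y) z = cinner x z + cinner y z"
  by (simp add: cinner_def distrib_right sum.distrib)
lemma cinner_add_right: "cinner z (x + y) = cinner z x + cinner z y"
  by (simp add: cinner_def distrib_left sum.distrib)

lemma sum_if_right: "(\<Sum>j\<in>UNIV. f j * (if j = i then b else 0)) = f i * (b::complex)" for f :: "'n::finite \<Rightarrow> complex"
proof -
  have "(\<Sum>j\<in>UNIV. f j * (if j = i then b else 0)) = (\<Sum>j\<in>UNIV. if j = i then f i * b else 0)"
    by (rule sum.cong) auto
  thus ?thesis by simp
qed
lemma sum_if_left: "(\<Sum>j\<in>UNIV. cnj (if j = i then b else 0) * f j) = cnj b * (f i::complex)" for f :: "'n::finite \<Rightarrow> complex"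
proof -
  have "(\<Sum>j\<in>UNIV. cnj (if j = i then b else 0) * f j) = (\<Sum>j\<in>UNIV. if j = i then cnj b * f i else 0)"
    by (rule sum.cong) auto
  thus ?thesis by simp
qed

lemma qf_expand:
  assumes h: "hermitian A"
  shows "qf A (v + (\<chi> j. if j = i then \<beta> else 0)) =
     qf A v + \<beta> * cnj ((A *v v)$i) + cnj \<beta> * (A *v v)$i + cnj \<beta> * \<beta> * A$i$i"
proof -
  let ?y = "(\<chi> j. if j = i then \<beta> else 0) :: complex^'a"
  have Ay: "A *v ?y = (\<chi> k. A$k$i * \<beta>)"
    unfolding matrix_vector_mult_def vec_eq_iff by (simp add: sum_if_right)
  have 1: "cinner v (A *v ?y) = \<beta> * cnj ((A *v v)$i)"
  proof -
    have "cinner v (A *v ?y) = (\<Sum>k\<in>UNIV. \<beta> * (cnj (v$k) * A$k$i))"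
      unfolding Ay cinner_def by (simp add: mult.commute mult.left_commute)
    also have "\<dots> = \<beta> * (\<Sum>k\<in>UNIV. cnj (v$k) * A$k$i)"
      by (simp add: sum_distrib_left)
    also have "(\<Sum>k\<in>UNIV. cnj (v$k) * A$k$i) = cnj ((A *v v)$i)"
      by (simp add: matrix_vector_mult_def herm_entry[OF h] mult.commute)
    finally show ?thesis .
  qed
  have 2: "cinner ?y (A *v v) = cnj \<beta> * (A *v v)$i"
    unfolding cinner_def by (simp add: sum_if_left)
  have 3: "cinner ?y (A *v ?y) = cnj \<beta> * \<beta> * A$i$i"
    unfolding Ay cinner_def by (simp only: vec_lambda_beta sum_if_left) (simp add: mult_ac)
  show ?thesis
    unfolding qf_def matrix_vector_right_distrib cinner_add_left cinner_add_right
    using 1 2 3 by simp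
qed

lemma quad_ineq:
  fixes q c a :: real
  assumes all: "\<And>t. 0 \<le> q - 2*t*c + t^2*c*a" and "0 \<le> a" "0 \<le> q" "0 \<le> c"
  shows "c \<le> a * q"
proof (cases "c = 0")
  case True thus ?thesis using assms by simp
next
  case False
  hence c: "c > 0" using assms by simp
  show ?thesis
  proof (cases "a = 0")
    case True
    have "0 \<le> q - 2*((q+1)/(2*c))*c + ((q+1)/(2*c))^2*c*a" by (rule all)
    also have "\<dots> = -1" using c True by (simp add: field_simps)
    finally show ?thesis by simp
  next
    case False
    hence a: "a > 0" using assms by simp
    have "0 \<le> q - 2*(1/a)*c + (1/a)^2*c*a" by (rule all)
    also have "\<dots> = q - c/a" using a by (simp add: field_simps power2_eq_square)
    finally show ?thesis using a by (simp add: field_simps)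
  qed
qed

lemma qf_zero[simp]: "qf A 0 = 0"
  by (simp add: qf_def cinner_def)

lemma psd_cauchy:
  assumes p: "psd A"
  shows "(cmod ((A *v v)$i))^2 \<le> Re (A$i$i) * Re (qf A v)"
proof -
  have h: "hermitian A" and pos: "\<And>w. 0 \<le> Re (qf A w)" using p by (auto simp: psd_alt)
  define b where "b = (A *v v)$i"
  define c where "c = (cmod b)^2"
  have bb: "b * cnj b = of_real c" unfolding c_def using complex_norm_square[of b] by simp
  have bb': "cnj b * b = of_real c" using bb by (simp add: mult.commute)
  have a0: "0 \<le> Re (A$i$i)"
  proof -
    have "0 \<le> Re (qf A (0 + (\<chi> j. if j = i then 1 else 0)))" by (rule pos)
    also have "\<dots> = Re (A$i$i)" unfolding qf_expand[OF h] by simp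
    finally show ?thesis .
  qed
  have "\<And>t. 0 \<le> Re (qf A v) - 2*t*c + t^2*c*Re (A$i$i)"
  proof -
    fix t :: real
    have "0 \<le> Re (qf A (v + (\<chi> j. if j = i then - (of_real t * b) else 0)))" by (rule pos)
    also have "qf A (v + (\<chi> j. if j = i then - (of_real t * b) else 0)) =
       qf A v - of_real t * (b * cnj b) - of_real t * (cnj b * b) + of_real (t^2) * (cnj b * b) * A$i$i"
      unfolding qf_expand[OF h] b_def[symmetric] by (simp add: algebra_simps power2_eq_square)
    also have "Re \<dots> = Re (qf A v) - 2*t*c + t^2*c*Re (A$i$i)"
      unfolding bb bb' by simp
    finally show "0 \<le> Re (qf A v) - 2*t*c + t^2*c*Re (A$i$i)" .
  qed
  from quad_ineq[OF this a0 pos] show ?thesis by (simp add: c_def b_def)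
qed

definition ej :: "'n::finite \<Rightarrow> complex^'n" where
  "ej j = (\<chi> k. if k = j then 1 else 0)"

lemma Av_ej: "(A *v ej j)$i = A$i$j"
  by (simp add: ej_def matrix_vector_mult_def sum_if_right[where b=1, simplified])

lemma qf_ej: "hermitian A \<Longrightarrow> qf A (ej j) = A$j$j"
  using qf_expand[of A 0 j 1] by (simp add: ej_def)

lemma herm_diag_real: assumes "hermitian A" shows "A$i$i = of_real (Re (A$i$i))"
proof -
  have "Im (cnj (A$i$i)) = Im (A$i$i)" using herm_entry[OF assms, of i i] by simp
  hence "Im (A$i$i) = 0" by simp
  thus ?thesis by (simp add: complex_eq_iff)
qed

lemma psd_diag_nonneg: assumes "psd A" shows "0 \<le> Re (A$i$i)"
proof -
  have "0 \<le> Re (qf A (ej i))" "hermitian A" using assms by (auto simp: psd_alt)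
  thus ?thesis by (simp add: qf_ej)
qed

lemma psd_zero_diag: assumes "psd A" "A$j$j = 0" shows "A$i$j = 0"
proof -
  have "(cmod ((A *v ej j)$i))^2 \<le> Re (A$i$i) * Re (qf A (ej j))" by (rule psd_cauchy[OF assms(1)])
  also have "\<dots> = 0" using assms by (simp add: qf_ej psd_alt)
  finally show ?thesis by (simp add: Av_ej)
qed

lemma mvm_diff: "(A - B) *v v = A *v v - B *v (v::complex^'n)"
proof -
  have "(\<Sum>j\<in>UNIV. (A$i$j - B$i$j) * v$j) = (\<Sum>j\<in>UNIV. A$i$j * v$j - B$i$j * v$j)" for i
    by (rule sum.cong) (auto simp: left_diff_distrib)
  thus ?thesis by (simp add: vec_eq_iff matrix_vector_mult_def sum_subtractf)
qed
lemma mvm_add: "(A + B) *v v = A *v v + B *v (v::complex^'n)"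
  by (simp add: vec_eq_iff matrix_vector_mult_def sum.distrib algebra_simps)
lemma cinner_diff_right: "cinner z (x - y) = cinner z x - cinner z y"
  by (simp add: cinner_def right_diff_distrib sum_subtractf)
lemma qf_diff: "qf (A - B) v = qf A v - qf B v"
  by (simp add: qf_def mvm_diff cinner_diff_right)

lemma qf_outer: "qf (outer c) v = of_real ((cmod (cinner c v))^2)"
proof -
  have "qf (outer c) v = (\<Sum>i\<in>UNIV. cnj (v$i) * c$i * cinner c v)"
    by (simp add: qf_def outer_def cinner_def matrix_vector_mult_def sum_distrib_left mult_ac)
  also have "\<dots> = cinner v c * cinner c v"
    by (simp add: cinner_def sum_distrib_right)
  also have "\<dots> = cnj (cinner c v) * cinner c v" by (simp add: cnj_cinner)
  also have "\<dots> = of_real ((cmod (cinner c v))^2)"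
    using complex_norm_square[of "cinner c v"] by (simp add: mult.commute)
  finally show ?thesis .
qed

lemma adj_diff: "adj (A - B) = adj A - adj B"
  by (simp add: adj_def vec_eq_iff)
lemma adj_outer: "adj (outer c) = outer c"
  by (simp add: adj_def outer_def vec_eq_iff mult.commute)

lemma psd_step:
  assumes p: "psd A" and ne: "A$i$i \<noteq> 0"
  defines "c \<equiv> (\<chi> j. A$j$i / of_real (sqrt (Re (A$i$i))))"
  shows "psd (A - outer c) \<and> (A - outer c)$i$i = 0 \<and> (\<forall>j. A$j$j = 0 \<longrightarrow> (A - outer c)$j$j = 0)"
proof -
  have h: "hermitian A" using p by (simp add: psd_alt)
  define r where "r = Re (A$i$i)"
  have Aii: "A$i$i = of_real r" using herm_diag_real[OF h] r_def by simp
  have r: "r > 0" using psd_diag_nonneg[OF p, of i] ne Aii unfolding r_def[symmetric] by (cases "r = 0") auto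
  have sr: "of_real (sqrt r) * of_real (sqrt r) = (of_real r :: complex)"
  proof -
    have "sqrt r * sqrt r = r" using r by simp
    thus ?thesis by (metis of_real_mult)
  qed
  have oc: "outer c $ j $ k = A$j$i * A$i$k / of_real r" for j k
  proof -
    have "outer c $ j $ k = A$j$i * cnj (A$k$i) / (of_real (sqrt r) * of_real (sqrt r))"
      by (simp add: outer_def c_def r_def)
    thus ?thesis by (simp add: sr herm_entry[OF h])
  qed
  have herm': "hermitian (A - outer c)"
    using h by (simp add: hermitian_def adj_diff adj_outer)
  have ci: "cinner c v = (A *v v)$i / of_real (sqrt r)" for v
    by (simp add: cinner_def c_def r_def matrix_vector_mult_def herm_entry[OF h] sum_divide_distrib mult.commute)
  have qf': "qf (A - outer c) v \<in> \<real> \<and> 0 \<le> Re (qf (A - outer c) v)" for v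
  proof -
    obtain x where q: "qf A v = of_real x" using herm_qf_real[OF h] by (auto elim: Reals_cases)
    have "(cmod ((A *v v)$i))^2 \<le> r * x" using psd_cauchy[OF p, of v i] r_def q by simp
    hence "(cmod ((A *v v)$i))^2 / r \<le> x" by (simp add: pos_divide_le_eq[OF r] mult.commute)
    moreover have "(cmod (cinner c v))^2 = (cmod ((A *v v)$i))^2 / r"
      using r by (simp add: ci norm_divide power_divide)
    moreover have "qf (A - outer c) v = of_real (x - (cmod (cinner c v))^2)"
      by (simp add: qf_diff qf_outer q)
    ultimately show ?thesis by simp
  qed
  have d1: "(A - outer c)$i$i = 0" using r by (simp add: oc Aii power2_eq_square)
  have d2: "(A - outer c)$j$j = 0" if "A$j$j = 0" for j
    using psd_zero_diag[OF p that, of i] that by (simp add: oc)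
  show ?thesis using herm' qf' d1 d2 by (simp add: psd_alt)
qed

lemma psd_decomp: "psd A \<Longrightarrow> \<exists>cs. A = sum_list (map outer cs)"
proof (induction "card {i. A$i$i \<noteq> 0}" arbitrary: A rule: less_induct)
  case less
  show ?case
  proof (cases "\<exists>i. A$i$i \<noteq> 0")
    case False
    then have "A = 0" using psd_zero_diag[OF less.prems] by (simp add: vec_eq_iff)
    thus ?thesis by (intro exI[of _ "[]"]) simp
  next
    case True
    then obtain i where i: "A$i$i \<noteq> 0" by blast
    define c where "c = (\<chi> j. A$j$i / of_real (sqrt (Re (A$i$i))))"
    have st: "psd (A - outer c) \<and> (A - outer c)$i$i = 0 \<and> (\<forall>j. A$j$j = 0 \<longrightarrow> (A - outer c)$j$j = 0)"
      using psd_step[OF less.prems i] unfolding c_def .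
    have sub: "{j. (A - outer c)$j$j \<noteq> 0} \<subset> {j. A$j$j \<noteq> 0}" using st i by auto
    hence "card {j. (A - outer c)$j$j \<noteq> 0} < card {j. A$j$j \<noteq> 0}"
      by (rule psubset_card_mono[OF finite])
    from less.hyps[OF this] st obtain cs where "A - outer c = sum_list (map outer cs)" by blast
    hence "A = sum_list (map outer (c # cs))" by (simp add: algebra_simps)
    thus ?thesis by blast
  qed
qed

lemma mult_cnj_self: "z * cnj z = of_real ((cmod z)^2)"
  using complex_norm_square[of z] by simp
lemma scaleR_mat_entry: "((t::real) *\<^sub>R (A::complex^'n^'m)) $ i $ j = of_real t * A$i$j"
  unfolding vector_scaleR_component by (simp add: scaleR_conv_of_real)
lemma scaleR_vec_entry: "((t::real) *\<^sub>R (v::complex^'n)) $ i = of_real t * v$i"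
  unfolding vector_scaleR_component by (simp add: scaleR_conv_of_real)
lemma matrix_add_rdistrib': "(A + B) ** (C::complex^'p^'n) = A ** C + B ** C"
  by (simp add: vec_eq_iff matrix_matrix_mult_def distrib_right sum.distrib)

lemma kron_add_left: "kron (A + B) C = kron A C + kron B C"
  by (simp add: kron_def vec_eq_iff algebra_simps)
lemma kron_add_right: "kron C (A + B) = kron C A + kron C B"
  by (simp add: kron_def vec_eq_iff algebra_simps)
lemma kron_zero_left[simp]: "kron 0 C = 0"
  by (simp add: kron_def vec_eq_iff)
lemma kron_zero_right[simp]: "kron C 0 = 0"
  by (simp add: kron_def vec_eq_iff)
lemma kron_scaleR: "kron (s *\<^sub>R A) (t *\<^sub>R B) = (s*t) *\<^sub>R kron A B"
  by (simp add: kron_def vec_eq_iff scaleR_mat_entry)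
lemma kron_sum_left: "kron (sum_list (map f xs)) B = sum_list (map (\<lambda>x. kron (f x) B) xs)"
  by (induction xs) (simp_all add: kron_add_left)
lemma kron_sum_right: "kron B (sum_list (map f xs)) = sum_list (map (\<lambda>x. kron B (f x)) xs)"
  by (induction xs) (simp_all add: kron_add_right)

lemma mtrace_add: "mtrace (A + B) = mtrace A + mtrace B"
  by (simp add: mtrace_def sum.distrib)
lemma energy_add: "energy (A + B) H = energy A H + energy B H"
  by (simp add: energy_def matrix_add_rdistrib' mtrace_add)
lemma energy_zero[simp]: "energy 0 H = 0"
  by (simp add: energy_def mtrace_def)
lemma energy_scaleR: "energy (t *\<^sub>R A) H = t * energy A H"
  by (simp add: energy_def mtrace_def matrix_matrix_mult_def scaleR_mat_entry sum_distrib_left mult.assoc)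
lemma energy_neg: "energy A (- H) = - energy A H"
  by (simp add: energy_def mtrace_def matrix_matrix_mult_def sum_negf)
lemma energy_sum: "energy (sum_list (map f xs)) H = sum_list (map (\<lambda>x. energy (f x) H) xs)"
  by (induction xs) (simp_all add: energy_add)

lemma outer_zero[simp]: "outer 0 = 0"
  by (simp add: outer_def vec_eq_iff)
lemma outer_scaleR: "outer (t *\<^sub>R c) = (t^2) *\<^sub>R outer c"
  by (simp add: outer_def vec_eq_iff scaleR_vec_entry scaleR_mat_entry power2_eq_square mult_ac)

lemma norm_sq_vec: "(norm (c::complex^'n))^2 = (\<Sum>i\<in>UNIV. (cmod (c$i))^2)"
  by (simp add: norm_vec_def L2_set_def sum_nonneg)

lemma mtrace_outer: "mtrace (outer c) = of_real ((norm c)^2)"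
proof -
  have "mtrace (outer c) = (\<Sum>i\<in>UNIV. of_real ((cmod (c$i))^2))"
    unfolding mtrace_def outer_def by (simp add: mult_cnj_self)
  thus ?thesis by (simp add: norm_sq_vec)
qed

lemma mtrace_sum: "mtrace (sum_list (map f xs)) = sum_list (map (\<lambda>x. mtrace (f x)) xs)"
  by (induction xs) (simp_all add: mtrace_add, simp add: mtrace_def)

definition G :: "complex^('a::finite \<times> 'b::finite)^('a \<times> 'b) \<Rightarrow> complex^'a \<Rightarrow> complex^'b \<Rightarrow> real" where
  "G H v w = energy (kron (outer v) (outer w)) H"

lemma G_bound:
  assumes unit: "\<And>v w. norm v = 1 \<Longrightarrow> norm w = 1 \<Longrightarrow> G H v w \<le> M"
  shows "G H v w \<le> M * (norm v)^2 * (norm w)^2"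
proof (cases "v = 0 \<or> w = 0")
  case True thus ?thesis by (auto simp: G_def)
next
  case False
  define u where "u = (1 / norm v) *\<^sub>R v"
  define u' where "u' = (1 / norm w) *\<^sub>R w"
  have nu: "norm u = 1" "norm u' = 1" using False by (auto simp: u_def u'_def)
  have v: "v = norm v *\<^sub>R u" "w = norm w *\<^sub>R u'" using False by (auto simp: u_def u'_def)
  have "G H v w = ((norm v)^2 * (norm w)^2) * G H u u'"
    apply (subst v(1), subst v(2))
    by (simp add: G_def outer_scaleR kron_scaleR energy_scaleR)
  also have "\<dots> \<le> ((norm v)^2 * (norm w)^2) * M" by (rule mult_left_mono[OF unit[OF nu]]) simp
  finally show ?thesis by (simp add: mult_ac)
qed

lemma Re_sum_list: "Re (sum_list (map f xs)) = sum_list (map (\<lambda>x. Re (f x)) xs)"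
  by (induction xs) auto

lemma density_decomp:
  assumes "density r"
  obtains cs where "r = sum_list (map outer cs)" "sum_list (map (\<lambda>c. (norm c)^2) cs) = 1"
proof -
  obtain cs where cs: "r = sum_list (map outer cs)" using psd_decomp assms by (auto simp: density_def)
  have "1 = Re (mtrace r)" using assms by (simp add: density_def)
  also have "\<dots> = sum_list (map (\<lambda>c. (norm c)^2) cs)"
    unfolding cs mtrace_sum by (simp add: mtrace_outer Re_sum_list o_def)
  finally show ?thesis using that cs by simp
qed

lemma kron_density_bound:
  assumes "density ra" "density rb"
    and unit: "\<And>v w. norm v = 1 \<Longrightarrow> norm w = 1 \<Longrightarrow> G H v w \<le> M"
  shows "energy (kron ra rb) H \<le> M"
proof -
  obtain cs where cs: "ra = sum_list (map outer cs)" "sum_list (map (\<lambda>c. (norm c)^2) cs) = 1"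
    using density_decomp[OF assms(1)] by blast
  obtain ds where ds: "rb = sum_list (map outer ds)" "sum_list (map (\<lambda>c. (norm c)^2) ds) = 1"
    using density_decomp[OF assms(2)] by blast
  have "energy (kron ra rb) H = sum_list (map (\<lambda>d. sum_list (map (\<lambda>c. G H c d) cs)) ds)"
    unfolding cs ds kron_sum_left kron_sum_right energy_sum G_def by (simp add: o_def)
  also have "\<dots> \<le> sum_list (map (\<lambda>d. sum_list (map (\<lambda>c. M * (norm c)^2 * (norm d)^2) cs)) ds)"
    by (intro sum_list_mono G_bound unit)
  also have "\<dots> = M * sum_list (map (\<lambda>c. (norm c)^2) cs) * sum_list (map (\<lambda>c. (norm c)^2) ds)"
    by (simp add: sum_list_const_mult mult.assoc sum_list_mult_const)
  also have "\<dots> = M" using cs ds by simp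
  finally show ?thesis .
qed

lemma Sep_bound:
  assumes "\<rho> \<in> Sep"
    and unit: "\<And>v w. norm v = 1 \<Longrightarrow> norm w = 1 \<Longrightarrow> G H v w \<le> M"
  shows "energy \<rho> H \<le> M"
proof -
  have "Sep \<subseteq> {\<rho>. energy \<rho> H \<le> M}"
    unfolding Sep_def
  proof (rule hull_minimal)
    show "{kron ra rb |ra rb. density ra \<and> density rb} \<subseteq> {\<rho>. energy \<rho> H \<le> M}"
      using kron_density_bound unit by blast
    show "convex {\<rho>. energy \<rho> H \<le> M}"
    proof (rule convexI)
      fix x y :: "complex^('a \<times> 'b)^('a \<times> 'b)" and u v :: real
      assume "x \<in> {\<rho>. energy \<rho> H \<le> M}" "y \<in> {\<rho>. energy \<rho> H \<le> M}" "0 \<le> u" "0 \<le> v" "u + v = 1"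
      hence "u * energy x H + v * energy y H \<le> u * M + v * M"
        by (intro add_mono mult_left_mono) auto
      also have "\<dots> = M" using \<open>u + v = 1\<close> by (simp add: distrib_right[symmetric])
      finally show "u *\<^sub>R x + v *\<^sub>R y \<in> {\<rho>. energy \<rho> H \<le> M}"
        by (simp add: energy_add energy_scaleR)
    qed
  qed
  thus ?thesis using assms(1) by blast
qed

lemma mmult_entry: "(X ** Y)$i$j = (\<Sum>k\<in>UNIV. X$i$k * Y$k$j)"
  by (simp add: matrix_matrix_mult_def)

lemma adj_mult: "adj (A ** B) = adj B ** adj (A::complex^'n^'m)"
  by (simp add: adj_def matrix_matrix_mult_def vec_eq_iff mult.commute)

lemma kron_mult: "kron A B ** kron C D = kron (A ** C) (B ** D)"
proof -
  have "(\<Sum>r\<in>UNIV. A $ a $ fst r * B $ b $ snd r * (C $ fst r $ c * D $ snd r $ d)) =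
        (\<Sum>r1\<in>UNIV. A $ a $ r1 * C $ r1 $ c) * (\<Sum>r2\<in>UNIV. B $ b $ r2 * D $ r2 $ d)" for a b c d
  proof -
    have "(\<Sum>r1\<in>UNIV. A $ a $ r1 * C $ r1 $ c) * (\<Sum>r2\<in>UNIV. B $ b $ r2 * D $ r2 $ d) =
        (\<Sum>r1\<in>UNIV. \<Sum>r2\<in>UNIV. (A $ a $ r1 * C $ r1 $ c) * (B $ b $ r2 * D $ r2 $ d))"
      by (rule sum_product)
    also have "\<dots> = (\<Sum>r\<in>UNIV \<times> UNIV. (A $ a $ fst r * C $ fst r $ c) * (B $ b $ snd r * D $ snd r $ d))"
      by (simp add: sum.cartesian_product case_prod_beta)
    finally show ?thesis by (simp add: mult_ac UNIV_Times_UNIV)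
  qed
  thus ?thesis by (simp add: kron_def matrix_matrix_mult_def vec_eq_iff)
qed

lemma adj_kron: "adj (kron A B) = kron (adj A) (adj B)"
  by (simp add: adj_def kron_def vec_eq_iff)

lemma kron_conj: "kron Ua Ub ** kron ra rb ** adj (kron Ua Ub) = kron (Ua ** ra ** adj Ua) (Ub ** rb ** adj Ub)"
  by (simp add: adj_kron kron_mult)

lemma mtrace_comm: "mtrace (A ** B) = mtrace (B ** (A::complex^'n^'n))"
  unfolding mtrace_def mmult_entry
  by (subst sum.swap) (simp add: mult.commute)

lemma density_conj:
  assumes u: "unitary U" and d: "density r"
  shows "density (U ** r ** adj U)"
proof -
  have h: "hermitian r" using d by (simp add: density_def psd_alt)
  have "hermitian (U ** r ** adj U)"
    using h by (simp add: hermitian_def adj_mult adj_adj matrix_mul_assoc)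
  moreover have "qf (U ** r ** adj U) x = qf r (adj U *v x)" for x
    by (simp add: qf_def adj_inner flip: matrix_vector_mul_assoc)
  moreover have "mtrace (U ** r ** adj U) = mtrace r"
  proof -
    have "mtrace (U ** r ** adj U) = mtrace (adj U ** (U ** r))" by (rule mtrace_comm)
    also have "\<dots> = mtrace r" using u by (simp add: unitary_def matrix_mul_assoc)
    finally show ?thesis .
  qed
  ultimately show ?thesis using d by (simp add: density_def psd_alt)
qed

lemma linear_conj: "linear (\<lambda>X::complex^'n^'n. K ** X ** L)"
proof (rule linearI)
  fix x y :: "complex^'n^'n" and c :: real
  show "K ** (x + y) ** L = K ** x ** L + K ** y ** L"
    by (simp add: matrix_add_ldistrib matrix_add_rdistrib')
  show "K ** (c *\<^sub>R x) ** L = c *\<^sub>R (K ** x ** L)"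
    by (simp add: vec_eq_iff matrix_matrix_mult_def scaleR_mat_entry sum_distrib_left sum_distrib_right mult_ac scaleR_sum_right)
qed

lemma Sep_conj:
  assumes "unitary Ua" "unitary Ub" "\<rho> \<in> Sep"
  shows "kron Ua Ub ** \<rho> ** adj (kron Ua Ub) \<in> Sep"
proof -
  let ?f = "\<lambda>X. kron Ua Ub ** X ** adj (kron Ua Ub)"
  let ?S = "{kron ra rb |ra rb. density ra \<and> density rb} :: (complex^('a \<times> 'b)^('a \<times> 'b)) set"
  have "?f \<rho> \<in> convex hull (?f ` ?S)"
    using in_convex_hull_linear_image[OF linear_conj] assms(3) unfolding Sep_def by blast
  moreover have "?f ` ?S \<subseteq> ?S"
  proof
    fix Y assume "Y \<in> ?f ` ?S"
    then obtain ra rb where rr: "density ra" "density rb" "Y = ?f (kron ra rb)" by blast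
    hence "Y = kron (Ua ** ra ** adj Ua) (Ub ** rb ** adj Ub)" by (simp add: kron_conj)
    moreover have "density (Ua ** ra ** adj Ua)" "density (Ub ** rb ** adj Ub)"
      using density_conj assms(1,2) rr by auto
    ultimately show "Y \<in> ?S" by blast
  qed
  ultimately show ?thesis unfolding Sep_def using hull_mono by blast
qed

lemma outer_conj: "A ** outer v ** adj A = outer (A *v v)"
proof -
  have 1: "(A ** outer v) $ i $ l = (A *v v)$i * cnj (v$l)" for i l
    by (simp add: matrix_matrix_mult_def outer_def matrix_vector_mult_def sum_distrib_right mult.assoc)
  have 2: "cnj ((A *v v)$j) = (\<Sum>l\<in>UNIV. cnj (v$l) * cnj (A$j$l))" for j
    by (simp add: matrix_vector_mult_def mult.commute)
  have "(A ** outer v ** adj A) $ i $ j = (A *v v)$i * cnj ((A *v v)$j)" for i j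
    by (simp only: mmult_entry[of "A ** outer v"] 1) (simp add: 2 adj_def sum_distrib_left mult.assoc)
  thus ?thesis by (simp add: vec_eq_iff outer_def)
qed

lemma adj_mat1: "adj (mat 1) = mat 1"
  by (auto simp: adj_def mat_def vec_eq_iff)
lemma unitary_one: "unitary (mat 1)"
  by (simp add: unitary_def adj_mat1)

lemma cinner_self: "cinner v v = of_real ((norm v)^2)"
proof -
  have "cinner v v = (\<Sum>i\<in>UNIV. of_real ((cmod (v$i))^2))"
    unfolding cinner_def by (rule sum.cong) (auto simp: mult_cnj_self mult.commute)
  thus ?thesis by (simp add: norm_sq_vec)
qed

lemma cinner_diff_left: "cinner (x - y) z = cinner x z - cinner y z"
  by (simp add: cinner_def left_diff_distrib sum_subtractf)

definition hh :: "complex \<Rightarrow> complex^'n \<Rightarrow> complex^'n^'n" where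
  "hh a u = (\<chi> i j. (if i = j then 1 else 0) - a * u$i * cnj (u$j))"

lemma hh_apply: "(hh a u *v x)$i = x$i - a * u$i * cinner u x"
proof -
  have "(hh a u *v x)$i = (\<Sum>j\<in>UNIV. (if i = j then x$j else 0) - a * u$i * (cnj (u$j) * x$j))"
    unfolding hh_def matrix_vector_mult_def vec_lambda_beta
    by (rule sum.cong) (auto simp: left_diff_distrib mult.assoc)
  also have "\<dots> = x$i - a * u$i * cinner u x"
    by (simp add: sum_subtractf cinner_def sum_distrib_left)
  finally show ?thesis .
qed

lemma hh_unitary:
  assumes ra: "cnj a = a" and an: "a * cinner u u = 2"
  shows "unitary (hh a u)"
proof -
  have adj: "adj (hh a u) = hh a u"
    by (simp add: adj_def hh_def vec_eq_iff ra mult.commute mult.left_commute)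
  have "(hh a u ** hh a u) $ i $ j = mat 1 $ i $ j" for i j
  proof -
    let ?c = "(\<chi> k. hh a u $ k $ j) :: complex^'a"
    have "(hh a u ** hh a u) $ i $ j = (hh a u *v ?c)$i"
      by (simp add: mmult_entry matrix_vector_mult_def)
    also have "\<dots> = ?c$i - a * u$i * cinner u ?c" by (rule hh_apply)
    also have "cinner u ?c = cnj (u$j) - a * cinner u u * cnj (u$j)"
    proof -
      have "cinner u ?c = (\<Sum>k\<in>UNIV. (if k = j then cnj (u$k) else 0) - a * cnj (u$j) * (cnj (u$k) * u$k))"
        unfolding cinner_def hh_def vec_lambda_beta by (rule sum.cong) (auto simp: right_diff_distrib mult_ac)
      also have "\<dots> = cnj (u$j) - a * cnj (u$j) * cinner u u"
        by (simp add: sum_subtractf cinner_def sum_distrib_left)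
      finally show ?thesis by (simp add: mult_ac)
    qed
    also have "?c$i - a * u$i * (cnj (u$j) - a * cinner u u * cnj (u$j)) = mat 1 $ i $ j"
    proof -
      have "a * cinner u u * cnj (u$j) = 2 * cnj (u$j)" using an by simp
      hence "a * u$i * (cnj (u$j) - a * cinner u u * cnj (u$j)) = - (a * u$i * cnj (u$j))"
        by (simp add: algebra_simps)
      thus ?thesis by (simp add: hh_def mat_def)
    qed
    finally show ?thesis .
  qed
  hence "hh a u ** hh a u = mat 1" by (simp add: vec_eq_iff)
  thus ?thesis by (simp add: unitary_def adj)
qed

lemma householder:
  assumes nv: "norm v = 1" and nw: "norm w = 1" and r: "cinner w v \<in> \<real>"
  shows "\<exists>U. unitary U \<and> U *v v = w"
proof (cases "v = w")
  case True thus ?thesis using unitary_one by (intro exI[of _ "mat 1"]) simp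
next
  case False
  define u where "u = v - w"
  define n where "n = cinner u u"
  define a where "a = 2 / n"
  obtain r0 where r0: "cinner w v = of_real r0" using r by (auto elim: Reals_cases)
  have vw: "cinner v w = of_real r0" using r0 cnj_cinner[of w v] by simp
  have vv: "cinner v v = 1" "cinner w w = 1" using nv nw by (simp_all add: cinner_self)
  have uv: "cinner u v = 1 - of_real r0" by (simp add: u_def cinner_diff_left vv r0)
  have nn: "n = 2 - 2 * of_real r0"
    by (simp add: n_def u_def cinner_diff_left cinner_diff_right vv r0 vw)
  have "u \<noteq> 0" using False by (simp add: u_def)
  hence n0: "n \<noteq> 0" by (simp add: n_def cinner_self)
  have nreal: "cnj n = n" by (simp add: n_def cinner_self)
  have ra: "cnj a = a" by (simp add: a_def nreal)
  have an: "a * cinner u u = 2" using n0 by (simp add: a_def n_def)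
  have "hh a u *v v = w"
  proof -
    have n2: "n = 2 * (1 - of_real r0)" by (simp add: nn)
    have "a * (1 - of_real r0) = (2 * (1 - of_real r0)) / n" by (simp add: a_def)
    also have "\<dots> = 1" using n0 by (simp only: n2[symmetric]) simp
    finally have a1: "a * (1 - of_real r0) = 1" .
    have "(hh a u *v v)$i = w$i" for i
    proof -
      have "(hh a u *v v)$i = v$i - u$i * (a * (1 - of_real r0))" by (simp add: hh_apply uv mult_ac)
      also have "\<dots> = w$i" by (simp add: a1 u_def)
      finally show ?thesis .
    qed
    thus ?thesis by (simp add: vec_eq_iff)
  qed
  thus ?thesis using hh_unitary[OF ra an] by blast
qed

definition csmul :: "complex \<Rightarrow> complex^'n \<Rightarrow> complex^'n" where
  "csmul z w = (\<chi> i. z * w$i)"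

lemma exists_unitary_outer:
  assumes nv: "norm v = 1" and nw: "norm w = 1"
  shows "\<exists>U. unitary U \<and> outer (U *v v) = outer w"
proof (cases "cinner w v = 0")
  case True
  then obtain U where "unitary U" "U *v v = w" using householder[OF nv nw] by auto
  thus ?thesis by auto
next
  case False
  define p where "p = cinner w v"
  define z where "z = p / of_real (cmod p)"
  have p0: "p \<noteq> 0" using False by (simp add: p_def)
  have "z * cnj z = (p * cnj p) / (of_real (cmod p))^2" by (simp add: z_def power2_eq_square)
  also have "\<dots> = 1" using p0 by (simp add: mult_cnj_self)
  finally have zz: "z * cnj z = 1" "cnj z * z = 1" by (simp_all add: mult.commute)
  have ow: "outer (csmul z w) = outer w"
  proof -
    have "z * w$i * (cnj z * cnj (w$j)) = w$i * cnj (w$j)" for i j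
    proof -
      have "z * w$i * (cnj z * cnj (w$j)) = (z * cnj z) * (w$i * cnj (w$j))" by (simp add: mult_ac)
      thus ?thesis using zz by simp
    qed
    thus ?thesis by (simp add: outer_def csmul_def vec_eq_iff)
  qed
  have "(norm (csmul z w))^2 = (norm w)^2"
  proof -
    have "cmod z = 1" using p0 by (simp add: z_def norm_divide)
    thus ?thesis by (simp add: norm_sq_vec csmul_def norm_mult)
  qed
  hence nw': "norm (csmul z w) = 1" using nw power2_eq_iff_nonneg[of "norm (csmul z w)" 1] by simp
  have "cinner (csmul z w) v = cnj z * p"
    by (simp add: cinner_def csmul_def p_def sum_distrib_left mult.assoc)
  also have "\<dots> = of_real (cmod p)"
  proof -
    have "cnj z * p = (p * cnj p) / of_real (cmod p)" by (simp add: z_def mult.commute)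
    also have "\<dots> = of_real ((cmod p)^2) / of_real (cmod p)" by (simp add: mult_cnj_self)
    also have "\<dots> = of_real (cmod p)" using p0 by (simp add: power2_eq_square)
    finally show ?thesis .
  qed
  finally have "cinner (csmul z w) v \<in> \<real>" by simp
  then obtain U where "unitary U" "U *v v = csmul z w" using householder[OF nv nw'] by auto
  thus ?thesis using ow by auto
qed

lemma G_expand: "G H v w = Re (\<Sum>i\<in>UNIV. \<Sum>k\<in>UNIV.
   (v$fst i * cnj (v$fst k)) * (w$snd i * cnj (w$snd k)) * H$k$i)"
  by (simp add: G_def energy_def mtrace_def mmult_entry kron_def outer_def)

lemma cont_G: "continuous_on S (\<lambda>p. G H (fst p) (snd p))"
  unfolding G_expand by (intro continuous_intros)

lemma sphere_ne: "sphere (0::complex^'n) 1 \<noteq> {}"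
  using vector_choose_size[of 1] by auto

lemma G_max: "\<exists>v w. norm v = 1 \<and> norm w = 1 \<and> (\<forall>v' w'. norm v' = 1 \<longrightarrow> norm w' = 1 \<longrightarrow> G H v' w' \<le> G H v w)"
proof -
  let ?S = "sphere (0::complex^'a) 1 \<times> sphere (0::complex^'b) 1"
  have "compact ?S" by (intro compact_Times compact_sphere)
  moreover have "?S \<noteq> {}" using sphere_ne[where 'n='a] sphere_ne[where 'n='b] by (simp only: Times_empty de_Morgan_disj) simp
  ultimately obtain p where "p \<in> ?S" "\<forall>q\<in>?S. G H (fst q) (snd q) \<le> G H (fst p) (snd p)"
    using continuous_attains_sup[OF _ _ cont_G] by blast
  thus ?thesis by (intro exI[of _ "fst p"] exI[of _ "snd p"]) (auto simp: mem_Times_iff)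
qed

lemma G_neg: "G (- H) v w = - G H v w"
  by (simp add: G_def energy_neg)

lemma cont_qf: "continuous_on S (\<lambda>v. Re (qf H v))"
  unfolding qf_def cinner_def matrix_vector_mult_def vec_lambda_beta by (intro continuous_intros)

lemma mvm_neg: "(- H) *v v = - (H *v (v::complex^'n))"
  by (simp add: vec_eq_iff matrix_vector_mult_def sum_negf)

lemma eig_neg: "real_eigenvalues (- H) = uminus ` real_eigenvalues (H::complex^'n^'n)"
proof -
  have "x \<in> real_eigenvalues (- H) \<longleftrightarrow> - x \<in> real_eigenvalues H" for x
  proof -
    have "(- H) *v v = x *\<^sub>R v \<longleftrightarrow> H *v v = (- x) *\<^sub>R v" for v
    proof -
      have "(- H) *v v = x *\<^sub>R v \<longleftrightarrow> - (H *v v) = x *\<^sub>R v" by (simp add: mvm_neg)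
      also have "\<dots> \<longleftrightarrow> H *v v = (- x) *\<^sub>R v" by (metis minus_minus scaleR_minus_left)
      finally show ?thesis .
    qed
    thus ?thesis by (simp add: real_eigenvalues_def)
  qed
  moreover have "x \<in> uminus ` real_eigenvalues H \<longleftrightarrow> - x \<in> real_eigenvalues H" for x
  proof
    assume "x \<in> uminus ` real_eigenvalues H"
    then obtain y where "y \<in> real_eigenvalues H" "x = - y" by blast
    thus "- x \<in> real_eigenvalues H" by simp
  next
    assume "- x \<in> real_eigenvalues H"
    hence "- (- x) \<in> uminus ` real_eigenvalues H" by (rule imageI)
    thus "x \<in> uminus ` real_eigenvalues H" by simp
  qed
  ultimately show ?thesis by blast
qed

lemma cinner_scaleR_right: "cinner a (t *\<^sub>R b) = of_real t * cinner a b"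
  unfolding cinner_def vector_scaleR_component by (simp add: scaleR_conv_of_real sum_distrib_left mult_ac)
lemma cinner_scaleR_left: "cinner (t *\<^sub>R a) b = of_real t * cinner a b"
  unfolding cinner_def vector_scaleR_component by (simp add: scaleR_conv_of_real sum_distrib_left mult_ac)

lemma inner_cinner: "inner (a::complex^'n) b = Re (cinner b a)"
  by (simp add: inner_vec_def cinner_def inner_complex_def Re_sum mult.commute)

lemma eig_finite:
  assumes h: "hermitian (H::complex^'n^'n)"
  shows "finite (real_eigenvalues H)"
proof -
  let ?S = "real_eigenvalues H"
  define ev where "ev x = (SOME v. v \<noteq> 0 \<and> H *v v = x *\<^sub>R v)" for x
  have ev: "ev x \<noteq> 0 \<and> H *v ev x = x *\<^sub>R ev x" if "x \<in> ?S" for x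
  proof -
    from that obtain v where "v \<noteq> 0 \<and> H *v v = x *\<^sub>R v" by (auto simp: real_eigenvalues_def)
    thus ?thesis unfolding ev_def by (rule someI)
  qed
  have inj: "inj_on ev ?S"
  proof (rule inj_onI)
    fix x y assume x: "x \<in> ?S" and y: "y \<in> ?S" and e: "ev x = ev y"
    have "x *\<^sub>R ev x = H *v ev x" using ev[OF x] by simp
    also have "\<dots> = H *v ev y" using e by simp
    also have "\<dots> = y *\<^sub>R ev y" using ev[OF y] by simp
    also have "\<dots> = y *\<^sub>R ev x" using e by simp
    finally have "x *\<^sub>R ev x = y *\<^sub>R ev x" .
    thus "x = y" using ev[OF x] by simp
  qed
  have orth: "cinner (ev y) (ev x) = 0" if x: "x \<in> ?S" and y: "y \<in> ?S" and xy: "x \<noteq> y" for x y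
  proof -
    have e1: "H *v ev x = x *\<^sub>R ev x" "H *v ev y = y *\<^sub>R ev y" using ev[OF x] ev[OF y] by auto
    have "of_real x * cinner (ev y) (ev x) = cinner (ev y) (H *v ev x)"
      by (simp only: e1 cinner_scaleR_right)
    also have "\<dots> = cinner (adj H *v ev y) (ev x)" by (rule adj_inner)
    also have "\<dots> = cinner (H *v ev y) (ev x)" using h by (simp only: hermitian_def)
    also have "\<dots> = of_real y * cinner (ev y) (ev x)"
      by (simp only: e1 cinner_scaleR_left)
    finally have "of_real x * cinner (ev y) (ev x) - of_real y * cinner (ev y) (ev x) = 0" by simp
    hence "(of_real x - of_real y) * cinner (ev y) (ev x) = 0" by (simp only: left_diff_distrib)
    thus ?thesis using xy by simp
  qed
  have "pairwise orthogonal (ev ` ?S)"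
  proof (rule pairwiseI)
    fix p q assume "p \<in> ev ` ?S" "q \<in> ev ` ?S" "p \<noteq> q"
    then obtain x y where "x \<in> ?S" "y \<in> ?S" "p = ev x" "q = ev y" "x \<noteq> y" by blast
    thus "orthogonal p q" unfolding orthogonal_def inner_cinner using orth by simp
  qed
  moreover have "0 \<notin> ev ` ?S"
  proof
    assume "0 \<in> ev ` ?S"
    then obtain x where "x \<in> ?S" "ev x = 0" by (metis imageE)
    thus False using ev by blast
  qed
  ultimately have "independent (ev ` ?S)" by (rule pairwise_orthogonal_independent)
  hence "finite (ev ` ?S)" by (rule independent_imp_finite)
  thus ?thesis using inj by (rule finite_imageD)
qed

lemma mat_mvm: "mat c *v v = (\<chi> i. c * v$i)"
  unfolding vec_eq_iff matrix_vector_mult_def mat_def vec_lambda_beta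
proof
  fix i
  have "(\<Sum>j\<in>UNIV. (if i = j then c else 0) * v$j) = (\<Sum>j\<in>UNIV. if j = i then c * v$i else 0)"
    by (rule sum.cong) auto
  thus "(\<Sum>j\<in>UNIV. (if i = j then c else 0) * v$j) = c * v$i" by simp
qed

lemma qf_scaleR: "qf H (t *\<^sub>R v) = of_real (t^2) * qf H v"
proof -
  have "H *v (t *\<^sub>R v) = t *\<^sub>R (H *v v)"
    unfolding vec_eq_iff matrix_vector_mult_def vector_scaleR_component vec_lambda_beta
    by (simp add: scaleR_conv_of_real sum_distrib_left mult_ac)
  thus ?thesis by (simp add: qf_def cinner_scaleR_left cinner_scaleR_right power2_eq_square)
qed

lemma eig_nonempty:
  assumes h: "hermitian (H::complex^'n^'n)"
  shows "real_eigenvalues H \<noteq> {}"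
proof -
  obtain v0 where v0: "v0 \<in> sphere 0 1" "\<forall>v\<in>sphere 0 1. Re (qf H v) \<le> Re (qf H v0)"
    using continuous_attains_sup[OF compact_sphere sphere_ne cont_qf] by blast
  define l where "l = Re (qf H v0)"
  define M where "M = mat (of_real l) - H"
  have nv0: "norm v0 = 1" using v0 by simp
  have qfr: "qf H v = of_real (Re (qf H v))" for v
    using herm_qf_real[OF h] by (simp add: complex_is_Real_iff)
  have bound: "Re (qf H v) \<le> l * (norm v)^2" for v
  proof (cases "v = 0")
    case True thus ?thesis by simp
  next
    case False
    define u where "u = (1 / norm v) *\<^sub>R v"
    have nu: "norm u = 1" using False by (simp add: u_def)
    have vu: "v = norm v *\<^sub>R u" using False by (simp add: u_def)
    have "Re (qf H v) = (norm v)^2 * Re (qf H u)" by (subst vu, simp add: qf_scaleR)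
    also have "\<dots> \<le> (norm v)^2 * l" using v0 nu by (intro mult_left_mono) (auto simp: l_def)
    finally show ?thesis by (simp add: mult.commute)
  qed
  have qfM: "qf M v = of_real (l * (norm v)^2 - Re (qf H v))" for v
  proof -
    have "qf (mat (of_real l)) v = of_real l * cinner v v"
      by (simp add: qf_def mat_mvm cinner_def sum_distrib_left mult_ac)
    hence "qf M v = of_real l * cinner v v - qf H v"
      by (simp add: M_def qf_diff)
    also have "\<dots> = of_real (l * (norm v)^2 - Re (qf H v))"
      by (subst qfr) (simp add: cinner_self)
    finally show ?thesis .
  qed
  have am: "adj (mat (of_real l)) = (mat (of_real l) :: complex^'n^'n)"
    by (auto simp: adj_def mat_def vec_eq_iff)
  have hM: "hermitian M"
    using h unfolding M_def hermitian_def adj_diff am by simp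
  have pM: "psd M" using hM bound by (simp add: psd_alt qfM)
  have "M *v v0 = 0"
  proof -
    have "(cmod ((M *v v0)$i))^2 \<le> Re (M$i$i) * Re (qf M v0)" for i by (rule psd_cauchy[OF pM])
    moreover have "Re (qf M v0) = 0" by (simp add: qfM nv0 l_def)
    ultimately show ?thesis by (simp add: vec_eq_iff)
  qed
  hence "\<forall>i. (H *v v0)$i = of_real l * v0$i"
    by (simp add: M_def mvm_diff mat_mvm vec_eq_iff)
  hence "H *v v0 = l *\<^sub>R v0"
    unfolding vec_eq_iff vector_scaleR_component by (simp add: scaleR_conv_of_real)
  moreover have "v0 \<noteq> 0" using nv0 by auto
  ultimately show ?thesis unfolding real_eigenvalues_def by blast
qed

lemma Emax_E0:
  assumes h: "hermitian (H::complex^'n^'n)"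
  shows "Emax H + E0 (- H) = 0"
proof -
  let ?S = "real_eigenvalues H"
  have f: "finite ?S" and ne: "?S \<noteq> {}" using eig_finite[OF h] eig_nonempty[OF h] by auto
  have "Min (uminus ` ?S) = - Max ?S"
  proof (rule Min_eqI)
    show "finite (uminus ` ?S)" using f by simp
    show "- Max ?S \<in> uminus ` ?S" using Max_in[OF f ne] by simp
    fix y assume "y \<in> uminus ` ?S"
    thus "- Max ?S \<le> y" using Max_ge[OF f] by auto
  qed
  thus ?thesis by (simp add: Emax_def E0_def eig_neg)
qed

lemma density_outer: "norm v = 1 \<Longrightarrow> density (outer v)"
  by (simp add: density_def psd_alt hermitian_def adj_outer qf_outer mtrace_outer)

lemma pure_in_Sep: "norm v = 1 \<Longrightarrow> norm w = 1 \<Longrightarrow> kron (outer v) (outer w) \<in> Sep"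
  unfolding Sep_def by (rule hull_inc) (auto intro: density_outer)

lemma ne_of_mem: "x \<in> X \<Longrightarrow> X \<noteq> {}" by auto

lemma CP_le:
  fixes H :: "complex^('a::finite \<times> 'b::finite)^('a \<times> 'b)"
  assumes r: "\<rho> \<in> Sep" and b: "\<And>\<sigma>. \<sigma> \<in> Sep \<Longrightarrow> m \<le> energy \<sigma> H \<and> energy \<sigma> H \<le> M"
  shows "CP \<rho> H \<le> M - m"
proof -
  let ?X = "{(Ua :: complex^'a^'a, Ub :: complex^'b^'b). unitary Ua \<and> unitary Ub}"
  let ?f = "\<lambda>(Ua :: complex^'a^'a, Ub :: complex^'b^'b). energy (kron Ua Ub ** \<rho> ** adj (kron Ua Ub)) H"
  have "(mat 1, mat 1) \<in> ?X" by (simp add: unitary_one)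
  hence ne: "?X \<noteq> {}" by (rule ne_of_mem)
  have fb: "m \<le> ?f p \<and> ?f p \<le> M" if "p \<in> ?X" for p
  proof -
    obtain Ua Ub where p0: "p = (Ua, Ub)" by (rule prod.exhaust)
    hence p: "p = (Ua, Ub)" "unitary Ua" "unitary Ub" using that by auto
    have "kron Ua Ub ** \<rho> ** adj (kron Ua Ub) \<in> Sep" by (rule Sep_conj[OF p(2,3) r])
    from b[OF this] show ?thesis unfolding p(1) by simp
  qed
  have A: "Sup (?f ` ?X) \<le> M" by (rule cSUP_least[OF ne]) (use fb in blast)
  have B: "m \<le> Inf (?f ` ?X)" by (rule cINF_greatest[OF ne]) (use fb in blast)
  show ?thesis unfolding CP_def using A B by linarith
qed

lemma CP_ge:
  fixes H :: "complex^('a::finite \<times> 'b::finite)^('a \<times> 'b)"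
  assumes n: "norm v1 = 1" "norm w1 = 1" "norm v0 = 1" "norm w0 = 1"
    and b: "\<And>\<sigma>. \<sigma> \<in> Sep \<Longrightarrow> m \<le> energy \<sigma> H \<and> energy \<sigma> H \<le> M"
  shows "G H v1 w1 - G H v0 w0 \<le> CP (kron (outer v1) (outer w1)) H"
proof -
  let ?r = "kron (outer v1) (outer w1)"
  let ?X = "{(Ua :: complex^'a^'a, Ub :: complex^'b^'b). unitary Ua \<and> unitary Ub}"
  let ?f = "\<lambda>(Ua :: complex^'a^'a, Ub :: complex^'b^'b). energy (kron Ua Ub ** ?r ** adj (kron Ua Ub)) H"
  have r: "?r \<in> Sep" using pure_in_Sep n by blast
  have fb: "m \<le> ?f p \<and> ?f p \<le> M" if "p \<in> ?X" for p
  proof -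
    obtain Ua Ub where p0: "p = (Ua, Ub)" by (rule prod.exhaust)
    hence p: "p = (Ua, Ub)" "unitary Ua" "unitary Ub" using that by auto
    have "kron Ua Ub ** ?r ** adj (kron Ua Ub) \<in> Sep" by (rule Sep_conj[OF p(2,3) r])
    from b[OF this] show ?thesis unfolding p(1) by simp
  qed
  have fval: "?f (Ua, Ub) = G H (Ua *v v1) (Ub *v w1)" for Ua Ub
    by (simp add: kron_conj outer_conj G_def)
  obtain Ua where Ua: "unitary Ua" "outer (Ua *v v1) = outer v0" using exists_unitary_outer[OF n(1,3)] by blast
  obtain Ub where Ub: "unitary Ub" "outer (Ub *v w1) = outer w0" using exists_unitary_outer[OF n(2,4)] by blast
  have mem: "(mat 1, mat 1) \<in> ?X" by (simp add: unitary_one)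
  have bdd: "bdd_above (?f ` ?X)" by (rule bdd_aboveI2) (use fb in blast)
  have bdd2: "bdd_below (?f ` ?X)" by (rule bdd_belowI2) (use fb in blast)
  have mem2: "(Ua, Ub) \<in> ?X" using Ua Ub by simp
  have "G H v1 w1 = ?f (mat 1, mat 1)" using fval[of "mat 1" "mat 1"] by simp
  also have "\<dots> \<le> Sup (?f ` ?X)"
    by (rule cSUP_upper[OF mem bdd])
  finally have 1: "G H v1 w1 \<le> Sup (?f ` ?X)" .
  have "Inf (?f ` ?X) \<le> ?f (Ua, Ub)"
    by (rule cINF_lower[OF bdd2 mem2])
  also have "?f (Ua, Ub) = G H v0 w0" using fval[of Ua Ub] by (simp add: G_def Ua Ub)
  finally have 2: "Inf (?f ` ?X) \<le> G H v0 w0" .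
  show ?thesis using 1 2 unfolding CP_def by simp
qed

theorem theorem1:
  fixes H :: "complex^('a::finite \<times> 'b::finite)^('a \<times> 'b)"
  assumes "hermitian H"
  shows "CP1 H = opnorm_inf H - (gapSep H + gapSep (- H))"
proof -
  obtain v1 w1 where n1: "norm v1 = 1" "norm w1 = 1"
    and mx: "\<And>v w. norm v = 1 \<Longrightarrow> norm w = 1 \<Longrightarrow> G H v w \<le> G H v1 w1"
    using G_max[of H] by blast
  obtain v0 w0 where n0: "norm v0 = 1" "norm w0 = 1"
    and mn: "\<And>v w. norm v = 1 \<Longrightarrow> norm w = 1 \<Longrightarrow> G (- H) v w \<le> G (- H) v0 w0"
    using G_max[of "- H"] by blast
  define M where "M = G H v1 w1"
  define m where "m = G H v0 w0"
  have mn': "G (- H) v w \<le> - m" if "norm v = 1" "norm w = 1" for v w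
    using mn[OF that] by (simp add: G_neg m_def)
  have bnd: "m \<le> energy \<sigma> H \<and> energy \<sigma> H \<le> M" if "\<sigma> \<in> Sep" for \<sigma>
  proof -
    have "energy \<sigma> H \<le> M" by (rule Sep_bound[OF that]) (use mx in \<open>simp add: M_def\<close>)
    moreover have "energy \<sigma> (- H) \<le> - m" by (rule Sep_bound[OF that]) (rule mn')
    ultimately show ?thesis by (simp add: energy_neg)
  qed
  let ?r1 = "kron (outer v1) (outer w1)"
  let ?r0 = "kron (outer v0) (outer w0)"
  have r1: "?r1 \<in> Sep" and r0: "?r0 \<in> Sep" using pure_in_Sep n1 n0 by auto
  have e1: "energy ?r1 H = M" and e0: "energy ?r0 H = m" by (simp_all add: M_def m_def G_def)
  have CPr1: "CP ?r1 H = M - m"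
    using CP_le[OF r1 bnd] CP_ge[OF n1 n0 bnd] by (simp add: M_def m_def)
  have CP1: "CP1 H = M - m"
    unfolding CP1_def
  proof (rule cSup_eq_maximum)
    show "M - m \<in> (\<lambda>\<rho>. CP \<rho> H) ` Sep" using r1 CPr1 by (metis image_eqI)
    fix x assume "x \<in> (\<lambda>\<rho>. CP \<rho> H) ` Sep"
    then obtain \<rho> where "\<rho> \<in> Sep" "x = CP \<rho> H" by blast
    thus "x \<le> M - m" using CP_le[OF _ bnd] by simp
  qed
  have I1: "(INF \<rho>\<in>Sep. energy \<rho> H) = m"
  proof (rule cInf_eq_minimum)
    show "m \<in> (\<lambda>\<rho>. energy \<rho> H) ` Sep" using r0 e0 by (metis image_eqI)
    fix x assume "x \<in> (\<lambda>\<rho>. energy \<rho> H) ` Sep"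
    then obtain \<rho> where "\<rho> \<in> Sep" "x = energy \<rho> H" by blast
    thus "m \<le> x" using bnd by simp
  qed
  have I2: "(INF \<rho>\<in>Sep. energy \<rho> (- H)) = - M"
  proof (rule cInf_eq_minimum)
    show "- M \<in> (\<lambda>\<rho>. energy \<rho> (- H)) ` Sep" using r1 e1
      by (metis energy_neg image_eqI)
    fix x assume "x \<in> (\<lambda>\<rho>. energy \<rho> (- H)) ` Sep"
    then obtain \<rho> where "\<rho> \<in> Sep" "x = energy \<rho> (- H)" by blast
    thus "- M \<le> x" using bnd by (simp add: energy_neg)
  qed
  have E: "Emax H + E0 (- H) = 0" by (rule Emax_E0[OF assms])
  show ?thesis unfolding gapSep_def opnorm_inf_def I1 I2 CP1 using E by linarith
qed

end
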